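(* For $n\le 5$ (with $n\ge 4$), any two distinct vertices of $\mathrm{PYR}(n)$ are adjacent, i.e. the skeleton of $\mathrm{PYR}(n)$ is a complete graph. For $n\ge 6$, $\mathrm{PYR}(n)$ has a pair of non-adjacent vertices; e.g. for $n=6$ the vertices with codes $\langle 1,0,0\rangle$ and $\langle 0,1,0\rangle$ are non-adjacent.
   Context: Let $K_n$ be the complete undirected graph on vertex set $\{1,\dots,n\}$ with edge set $E$. A Hamiltonian cycle $\langle 1,i_1,\dots,i_r,n,j_1,\dots,j_{n-r-2}\rangle$ is called a pyramidal tour if $i_1<i_2<\dots<i_r$ and $j_1>j_2>\dots>j_{n-r-2}$; tours are undirected. Let $PT_n$ be the set of all pyramidal tours. For $x\in PT_n$ its characteristic vector $x^v\in\mathbb{R}^E$ has $x^v_e=1$ if edge $e$ lies in $x$ and $0$ otherwise. The pyramidal tours polytope is $\mathrm{PYR}(n)=\operatorname{conv}\{x^v : x\in PT_n\}$. Every pyramidal tour contains the edge $\{1,2\}$; the tour is oriented so that vertex $2$ belongs to the increasing part. The code of $x$ is the $0/1$ vector $x^c=(x^c_3,\dots,x^c_{n-1})$ with $x^c_i=1$ if vertex $i$ is visited in the increasing part of $x$ and $x^c_i=0$ otherwise; $x\mapsto x^c$ is a bijection from $PT_n$ onto $\{0,1\}^{n-3}$. Two vertices are adjacent if the segment joining them is a one-dimensional face of the polytope. *)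

theory Defs
  imports "HOL-Analysis.Analysis" "HOL-Library.Function_Algebras"
begin

text \<open>Pointwise real vector space structure on functions, so that the
  space R^E (realised as functions on edges) is a real vector space.\<close>

instantiation "fun" :: (type, real_vector) real_vector
begin
definition scaleR_fun :: "real \<Rightarrow> ('a \<Rightarrow> 'b) \<Rightarrow> 'a \<Rightarrow> 'b"
  where "scaleR_fun r f = (\<lambda>x. r *\<^sub>R f x)"
instance
  by standard (auto simp: scaleR_fun_def fun_eq_iff scaleR_add_right scaleR_add_left)
end

definition cycle_edges :: "nat list \<Rightarrow> nat set set" where
  "cycle_edges vs = {{vs ! k, vs ! ((k + 1) mod length vs)} | k. k < length vs}"

text \<open>The lists is = i_1..i_r and js = j_1..j_{n-r-2} describe the
  pyramidal Hamiltonian cycle 1, i_1, .., i_r, n, j_1, .., j_{n-r-2}.\<close>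
definition pyr_seq :: "nat \<Rightarrow> nat list \<Rightarrow> nat list \<Rightarrow> bool" where
  "pyr_seq n is js \<longleftrightarrow>
     sorted_wrt (<) is \<and> sorted_wrt (>) js \<and>
     set is \<inter> set js = {} \<and> set is \<union> set js = {2..n-1}"

definition tour_edges :: "nat \<Rightarrow> nat list \<Rightarrow> nat list \<Rightarrow> nat set set" where
  "tour_edges n is js = cycle_edges (1 # is @ n # js)"

text \<open>PT_n, tours identified with their (undirected) edge sets.\<close>
definition PT :: "nat \<Rightarrow> nat set set set" where
  "PT n = {tour_edges n is js | is js. pyr_seq n is js}"

text \<open>Characteristic vector in R^E (coordinates outside E are 0).\<close>
definition char_vec :: "nat set set \<Rightarrow> (nat set \<Rightarrow> real)" where
  "char_vec T = (\<lambda>e. if e \<in> T then 1 else 0)"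

definition PYR :: "nat \<Rightarrow> (nat set \<Rightarrow> real) set" where
  "PYR n = convex hull (char_vec ` PT n)"

text \<open>Code of a tour: c is a 0/1 list (c_3,..,c_{n-1}); orientation such
  that vertex 2 lies in the increasing part.\<close>
definition has_code :: "nat \<Rightarrow> nat set set \<Rightarrow> nat list \<Rightarrow> bool" where
  "has_code n T c \<longleftrightarrow> length c = n - 3 \<and>
     (\<exists>is js. pyr_seq n is js \<and> 2 \<in> set is \<and> T = tour_edges n is js \<and>
        (\<forall>i\<in>{3..n-1}. (c ! (i - 3) = 1 \<longleftrightarrow> i \<in> set is) \<and> c ! (i - 3) \<in> {0, 1}))"

definition adjacent_in :: "'a::real_vector set \<Rightarrow> 'a \<Rightarrow> 'a \<Rightarrow> bool" where
  "adjacent_in P x y \<longleftrightarrow> x \<noteq> y \<and> closed_segment x y face_of P"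

end

theory Submission
  imports Defs
begin

lemma sum_fun_apply: "(\<Sum>s\<in>S. f s) e = (\<Sum>s\<in>S. f s e)"
  by (induction S rule: infinite_finite_induct) (auto simp: plus_fun_def zero_fun_def)

lemma scaleR_apply[simp]: "(c *\<^sub>R f) e = c *\<^sub>R f e"
  by (simp add: scaleR_fun_def)

lemma char_vec_01: "char_vec T e \<in> {0,1}" by (simp add: char_vec_def)

lemma char_vec_inj: "char_vec A = char_vec B \<Longrightarrow> A = B"
  unfolding char_vec_def by (metis (full_types) subsetI zero_neq_one equalityI)

lemma not_in_hull_01:
  fixes S :: "(nat set \<Rightarrow> real) set"
  assumes fin: "finite S" and S01: "\<And>s e. s\<in>S \<Longrightarrow> s e = 0 \<or> s e = 1" and p01: "\<And>e. p e = 0 \<or> p e = 1"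
    and pS: "p \<notin> S"
  shows "p \<notin> convex hull S"
proof
  assume "p \<in> convex hull S"
  then obtain u where u0: "\<forall>x\<in>S. 0 \<le> u x" and u1: "sum u S = 1" and up: "(\<Sum>x\<in>S. u x *\<^sub>R x) = p"
    using convex_hull_finite[OF fin] by auto
  have pe: "p e = (\<Sum>x\<in>S. u x * x e)" for e
  proof -
    have "p e = (\<Sum>x\<in>S. u x *\<^sub>R x) e" using up by simp
    also have "\<dots> = (\<Sum>x\<in>S. u x * x e)" by (simp add: sum_fun_apply)
    finally show "p e = (\<Sum>x\<in>S. u x * x e)" .
  qed
  have "\<exists>s\<in>S. u s \<noteq> 0"
  proof (rule ccontr)
    assume "\<not> (\<exists>s\<in>S. u s \<noteq> 0)"
    then have "sum u S = 0" by simp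
    then show False using u1 by simp
  qed
  then obtain s where sS: "s \<in> S" and us0: "u s \<noteq> 0" by blast
  have us: "u s > 0" using u0 sS us0 by (simp add: order_neq_le_trans)
  have "s \<noteq> p" using sS pS by auto
  then obtain e where ne: "s e \<noteq> p e" by auto
  have xe0: "0 \<le> x e" "x e \<le> 1" if "x \<in> S" for x using S01[OF that, of e] by auto
  show False
  proof (cases "p e = 0")
    case True
    then have se: "s e = 1" using ne S01[OF sS, of e] by auto
    have "(\<Sum>x\<in>S. u x * x e) = 0" using pe[of e] True by simp
    moreover have nn: "\<And>x. x\<in>S \<Longrightarrow> u x * x e \<ge> 0" using u0 xe0 by simp
    ultimately have "u s * s e = 0" using sum_nonneg_eq_0_iff[OF fin, of "\<lambda>x. u x * x e"] nn sS by blast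
    then show False using se us by simp
  next
    case False
    then have pe1: "p e = 1" using p01[of e] by simp
    then have se: "s e = 0" using ne S01[OF sS, of e] by auto
    have "(\<Sum>x\<in>S. u x * (1 - x e)) = sum u S - (\<Sum>x\<in>S. u x * x e)"
      by (simp add: algebra_simps sum_subtractf)
    also have "\<dots> = 0" using u1 pe[of e] pe1 by simp
    finally have "(\<Sum>x\<in>S. u x * (1 - x e)) = 0" .
    moreover have nn: "\<And>x. x\<in>S \<Longrightarrow> u x * (1 - x e) \<ge> 0" using u0 xe0 by simp
    ultimately have "u s * (1 - s e) = 0" using sum_nonneg_eq_0_iff[OF fin, of "\<lambda>x. u x * (1 - x e)"] nn sS by blast
    then show False using se us by simp
  qed
qed

lemma extreme_char:
  assumes fin: "finite F" and TF: "T \<in> F"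
  shows "char_vec T extreme_point_of convex hull (char_vec ` F)"
proof -
  have "char_vec ` F = insert (char_vec T) (char_vec ` (F - {T}))" using TF by auto
  moreover have "char_vec T \<notin> convex hull (char_vec ` (F - {T}))"
  proof (rule not_in_hull_01)
    show "finite (char_vec ` (F - {T}))" using fin by simp
    show "s e = 0 \<or> s e = 1" if sF: "s \<in> char_vec ` (F - {T})" for s e
    proof -
      obtain C where "s = char_vec C" using sF by blast
      then show ?thesis by (simp add: char_vec_def)
    qed
    show "\<And>e. char_vec T e = 0 \<or> char_vec T e = 1" by (auto simp: char_vec_def)
    show "char_vec T \<notin> char_vec ` (F - {T})" using char_vec_inj by blast
  qed
  ultimately show ?thesis
    by (metis extreme_point_of_convex_hull_insert fin finite_Diff finite_imageI)
qed

lemma plus_apply[simp]: "(f + g) x = f x + g x" by (simp add: plus_fun_def)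

lemma seg_face:
  assumes fin: "finite F" and AF: "A \<in> F" and BF: "B \<in> F" and AB: "A \<noteq> B"
    and ea: "ea \<in> A" "ea \<notin> B" and eb: "eb \<in> B" "eb \<notin> A"
    and oth: "\<forall>C\<in>F-{A,B}. ea \<notin> C \<and> eb \<notin> C"
  shows "closed_segment (char_vec A) (char_vec B) face_of convex hull (char_vec ` F)"
proof -
  define a where "a = char_vec A"
  define b where "b = char_vec B"
  define V where "V = char_vec ` F"
  define L where "L = (\<lambda>v::nat set \<Rightarrow> real. v ea + v eb)"
  have finV: "finite V" using fin by (simp add: V_def)
  have aV: "a \<in> V" and bV: "b \<in> V" using AF BF by (auto simp: a_def b_def V_def)
  have ab: "a \<noteq> b" using AB char_vec_inj by (auto simp: a_def b_def)
  have La: "L a = 1" and Lb: "L b = 1" using ea eb by (auto simp: L_def a_def b_def char_vec_def)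
  have Lo: "L v = 0" if vV: "v \<in> V - {a,b}" for v
  proof -
    obtain C where C: "C \<in> F" "v = char_vec C" using vV by (auto simp: V_def)
    have "C \<noteq> A" "C \<noteq> B" using vV C by (auto simp: a_def b_def)
    then show ?thesis using oth C by (auto simp: L_def char_vec_def)
  qed
  have Lle: "L v \<le> 1" if "v \<in> V" for v
    using La Lb Lo[of v] that by (cases "v \<in> {a,b}") auto
  have Lsum: "L (\<Sum>x\<in>V. u x *\<^sub>R x) = (\<Sum>x\<in>V. u x * L x)" for u
    by (simp add: L_def sum_fun_apply sum.distrib algebra_simps)
  have hullL: "L v \<le> 1" if vH: "v \<in> convex hull V" for v
  proof -
    obtain u where u0: "\<forall>x\<in>V. 0 \<le> u x" and u1: "sum u V = 1" and uv: "(\<Sum>x\<in>V. u x *\<^sub>R x) = v"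
      using vH convex_hull_finite[OF finV] by auto
    have "L v = (\<Sum>x\<in>V. u x * L x)" unfolding uv[symmetric] by (rule Lsum)
    also have "\<dots> \<le> (\<Sum>x\<in>V. u x * 1)"
    proof (rule sum_mono)
      fix x assume "x \<in> V"
      then show "u x * L x \<le> u x * 1" using u0 Lle by (intro mult_left_mono) auto
    qed
    finally show ?thesis using u1 by simp
  qed
  have hull1: "v \<in> closed_segment a b" if vH: "v \<in> convex hull V" and vL: "L v = 1" for v
  proof -
    obtain u where u0: "\<forall>x\<in>V. 0 \<le> u x" and u1: "sum u V = 1" and uv: "(\<Sum>x\<in>V. u x *\<^sub>R x) = v"
      using vH convex_hull_finite[OF finV] by auto
    have "(\<Sum>x\<in>V. u x * (1 - L x)) = sum u V - (\<Sum>x\<in>V. u x * L x)"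
      by (simp add: algebra_simps sum_subtractf)
    also have "\<dots> = 0" using u1 Lsum[of u] vL unfolding uv by simp
    finally have z: "(\<Sum>x\<in>V. u x * (1 - L x)) = 0" .
    have nn: "\<And>x. x \<in> V \<Longrightarrow> 0 \<le> u x * (1 - L x)" using u0 Lle by simp
    have "\<forall>x\<in>V. u x * (1 - L x) = 0"
      using sum_nonneg_eq_0_iff[OF finV, of "\<lambda>x. u x * (1 - L x)"] nn z by blast
    then have uz: "\<forall>x\<in>V - {a,b}. u x = 0"
    proof (intro ballI)
      fix x assume xV: "x \<in> V - {a,b}" and h: "\<forall>x\<in>V. u x * (1 - L x) = 0"
      then have "u x * (1 - L x) = 0" by blast
      moreover have "L x = 0" using Lo xV by blast
      ultimately show "u x = 0" by simp
    qed
    have s1: "(\<Sum>x\<in>V. u x *\<^sub>R x) = (\<Sum>x\<in>{a,b}. u x *\<^sub>R x)"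
      by (rule sum.mono_neutral_right) (use finV aV bV uz in auto)
    have s2: "sum u V = sum u {a,b}"
      by (rule sum.mono_neutral_right) (use finV aV bV uz in auto)
    have "v = (1 - u b) *\<^sub>R a + u b *\<^sub>R b" using s1 s2 u1 uv ab by simp
    moreover have "0 \<le> u b" "u b \<le> 1" using u0 aV bV s2 u1 ab by auto
    ultimately show ?thesis unfolding closed_segment_def by blast
  qed
  have Lcomb: "L ((1 - t) *\<^sub>R x + t *\<^sub>R y) = (1 - t) * L x + t * L y" for t x y
    by (simp add: L_def algebra_simps)
  show ?thesis
    unfolding a_def[symmetric] b_def[symmetric] V_def[symmetric] face_of_def
  proof (intro conjI ballI impI)
    show "closed_segment a b \<subseteq> convex hull V"
      unfolding segment_convex_hull by (rule hull_mono) (use aV bV in auto)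
    show "convex (closed_segment a b)" by simp
    fix a' b' p assume a': "a' \<in> convex hull V" and b': "b' \<in> convex hull V"
      and p: "p \<in> closed_segment a b" and po: "p \<in> open_segment a' b'"
    obtain t where "p = (1 - t) *\<^sub>R a + t *\<^sub>R b" using p unfolding closed_segment_def by blast
    then have "L p = (1 - t) * L a + t * L b" using Lcomb by simp
    then have Lp: "L p = 1" using La Lb by simp
    obtain u where u: "0 < u" "u < 1" "p = (1 - u) *\<^sub>R a' + u *\<^sub>R b'"
      using po by (auto simp: in_segment)
    have f1: "L p = (1 - u) * L a' + u * L b'" using u Lcomb by simp
    have f2: "L a' \<le> 1" "L b' \<le> 1" using hullL a' b' by auto
    have f3: "(1 - u) * L a' \<le> (1 - u) * 1" using u f2 by (intro mult_left_mono) auto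
    have f4: "u * L b' \<le> u * 1" using u f2 by (intro mult_left_mono) auto
    have gen: "\<And>X Y::real. L p = X + Y \<Longrightarrow> X \<le> 1 - u \<Longrightarrow> Y \<le> u \<Longrightarrow> X = 1 - u \<and> Y = u"
      using Lp by linarith
    have "(1 - u) * L a' = 1 - u \<and> u * L b' = u" using gen[OF f1] f3 f4 by simp
    then have e1: "(1 - u) * L a' = (1 - u) * 1" and e2: "u * L b' = u * 1" by simp_all
    from e1 e2 have "L a' = 1 \<and> L b' = 1" using u by simp
    then show "a' \<in> closed_segment a b" "b' \<in> closed_segment a b" using hull1 a' b' by auto
  qed
qed

definition pe :: "nat list \<Rightarrow> nat set set" where
  "pe vs = (\<lambda>(a,b). {a,b}) ` set (zip vs (tl vs))"

lemma pe_Nil[simp]: "pe [] = {}" by (simp add: pe_def)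
lemma pe_single[simp]: "pe [a] = {}" by (simp add: pe_def)
lemma pe_Cons2[simp]: "pe (a # b # r) = insert {a,b} (pe (b # r))" by (simp add: pe_def)

lemma pe_Cons: "pe (x # zs) = (if zs = [] then {} else insert {x, hd zs} (pe zs))"
  by (cases zs) auto

lemma pe_append: "pe (xs @ ys) = pe xs \<union> pe ys \<union> (if xs \<noteq> [] \<and> ys \<noteq> [] then {{last xs, hd ys}} else {})"
proof (induction xs)
  case Nil then show ?case by simp
next
  case (Cons x xs)
  show ?case
  proof (cases "xs = []")
    case True then show ?thesis by (cases ys) auto
  next
    case False
    then show ?thesis using Cons by (auto simp: pe_Cons[of x])
  qed
qed

lemma pe_snoc: "pe (xs @ [y]) = (if xs = [] then {} else insert {last xs, y} (pe xs))"
  by (simp add: pe_append)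

lemma pe_rev[simp]: "pe (rev xs) = pe xs"
proof (induction xs)
  case Nil then show ?case by simp
next
  case (Cons x xs)
  show ?case by (simp add: pe_snoc pe_Cons[of x] Cons last_rev insert_commute doubleton_eq_iff)
qed

lemma pe_upt: "pe [a..<b] = (\<lambda>i. {i, Suc i}) ` {i. a \<le> i \<and> Suc i < b}"
proof (induction b)
  case 0 then show ?case by simp
next
  case (Suc b)
  show ?case
  proof (cases "a < b")
    case True
    have "pe [a..<Suc b] = pe ([a..<b] @ [b])" using True by simp
    also have "\<dots> = insert {b - 1, b} (pe [a..<b])" using True by (simp add: pe_snoc)
    also have "\<dots> = (\<lambda>i. {i, Suc i}) ` insert (b - 1) {i. a \<le> i \<and> Suc i < b}"
      using Suc True by simp
    also have "insert (b - 1) {i. a \<le> i \<and> Suc i < b} = {i. a \<le> i \<and> Suc i < Suc b}"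
      using True by auto
    finally show ?thesis .
  next
    case False
    then have "[a..<Suc b] = (if a = b then [a] else [])" by auto
    then show ?thesis using False by auto
  qed
qed

lemma cycle_edges_pe:
  assumes "vs \<noteq> []"
  shows "cycle_edges vs = insert {last vs, hd vs} (pe vs)"
proof -
  have A: "pe vs = {{vs ! k, vs ! Suc k} | k. Suc k < length vs}"
    unfolding pe_def set_zip
  proof (intro equalityI subsetI)
    fix e assume "e \<in> (\<lambda>(a, b). {a, b}) ` {(vs ! i, tl vs ! i) |i. i < min (length vs) (length (tl vs))}"
    then show "e \<in> {{vs ! k, vs ! Suc k} | k. Suc k < length vs}" by (auto simp: nth_tl)
  next
    fix e assume "e \<in> {{vs ! k, vs ! Suc k} | k. Suc k < length vs}"
    then obtain k where k: "Suc k < length vs" "e = {vs ! k, vs ! Suc k}" by blast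
    show "e \<in> (\<lambda>(a, b). {a, b}) ` {(vs ! i, tl vs ! i) |i. i < min (length vs) (length (tl vs))}"
      by (rule image_eqI[of _ _ "(vs ! k, tl vs ! k)"]) (use k in \<open>auto simp: nth_tl\<close>)
  qed
  have L: "last vs = vs ! (length vs - 1)" "hd vs = vs ! 0" using assms by (auto simp: last_conv_nth hd_conv_nth)
  show ?thesis
    unfolding cycle_edges_def A L
  proof (intro equalityI subsetI)
    fix e assume "e \<in> {{vs ! k, vs ! ((k + 1) mod length vs)} | k. k < length vs}"
    then obtain k where k: "k < length vs" "e = {vs ! k, vs ! ((k + 1) mod length vs)}" by blast
    show "e \<in> insert {vs ! (length vs - 1), vs ! 0} {{vs ! k, vs ! Suc k} | k. Suc k < length vs}"
    proof (cases "Suc k < length vs")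
      case True then show ?thesis using k by auto
    next
      case False
      then have "k = length vs - 1" "Suc k = length vs" using k by auto
      then show ?thesis using k by auto
    qed
  next
    fix e assume "e \<in> insert {vs ! (length vs - 1), vs ! 0} {{vs ! k, vs ! Suc k} | k. Suc k < length vs}"
    then show "e \<in> {{vs ! k, vs ! ((k + 1) mod length vs)} | k. k < length vs}"
    proof
      assume e: "e = {vs ! (length vs - 1), vs ! 0}"
      have "(length vs - 1 + 1) mod length vs = 0" using assms by simp
      then show ?thesis using e assms by (intro CollectI exI[of _ "length vs - 1"]) auto
    next
      assume "e \<in> {{vs ! k, vs ! Suc k} | k. Suc k < length vs}"
      then obtain k where "Suc k < length vs" "e = {vs ! k, vs ! Suc k}" by blast
      then show ?thesis by (intro CollectI exI[of _ k]) auto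
    qed
  qed
qed

definition Q :: "nat \<Rightarrow> nat set set" where "Q n = (\<lambda>i. {i, Suc i}) ` {i. 5 \<le> i \<and> i < n}"

lemma pe_up5: "pe [5..<Suc n] = Q n" unfolding pe_upt Q_def by (rule arg_cong[where f="image _"]) auto

lemma pe_up4: assumes "n \<ge> 6" shows "pe [4..<Suc n] = insert {4,5} (Q n)"
proof -
  have "pe [4..<Suc n] = (\<lambda>i. {i, Suc i}) ` insert 4 {i. 5 \<le> i \<and> i < n}"
    unfolding pe_upt by (rule arg_cong[where f="image _"]) (use assms in auto)
  then show ?thesis by (simp add: Q_def)
qed

lemma X_edges: assumes n: "n \<ge> 6"
  shows "tour_edges n [2,3] (rev [4..<n]) = {{1,2},{2,3},{3,n},{4,1},{4,5}} \<union> Q n"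
proof -
  have l: "1 # [2,3] @ n # rev [4..<n] = [1,2,3] @ rev [4..<Suc n]" using n by simp
  have h: "hd (rev [4..<Suc n]) = n" "last (rev [4..<Suc n]) = 4" "rev [4..<Suc n] \<noteq> []"
    using n by (simp_all add: hd_rev last_rev del: upt_Suc)
  have ne: "[1,2,3] @ rev [4..<Suc n] \<noteq> []" by simp
  have c: "cycle_edges ([1,2,3] @ rev [4..<Suc n]) = insert {4,1} (pe ([1,2,3] @ rev [4..<Suc n]))"
    using cycle_edges_pe[OF ne] h by (simp del: upt_Suc)
  have p: "pe ([1,2,3] @ rev [4..<Suc n]) = {{1,2},{2,3},{3,n}} \<union> insert {4,5} (Q n)"
    using n h by (simp add: pe_Cons pe_up4 insert_commute del: upt_Suc)
  show ?thesis unfolding tour_edges_def l c p by auto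
qed

lemma Y_edges: assumes n: "n \<ge> 6"
  shows "tour_edges n [2,4] (rev [5..<n] @ [3]) = {{1,2},{2,4},{4,n},{5,3},{3,1}} \<union> Q n"
proof -
  have l: "1 # [2,4] @ n # rev [5..<n] @ [3] = [1,2,4] @ rev [5..<Suc n] @ [3]" using n by simp
  have h: "hd (rev [5..<Suc n]) = n" "last (rev [5..<Suc n]) = 5" "rev [5..<Suc n] \<noteq> []"
    using n by (simp_all add: hd_rev last_rev del: upt_Suc)
  have ne: "[1,2,4] @ rev [5..<Suc n] @ [3] \<noteq> []" by simp
  have c: "cycle_edges ([1,2,4] @ rev [5..<Suc n] @ [3]) = insert {3,1} (pe ([1,2,4] @ rev [5..<Suc n] @ [3]))"
    using cycle_edges_pe[OF ne] h by (simp del: upt_Suc)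
  have p: "pe ([1,2,4] @ rev [5..<Suc n] @ [3]) = {{1,2},{2,4},{4,n},{5,3}} \<union> Q n"
    using n h by (simp add: pe_Cons pe_append pe_up5 insert_commute del: upt_Suc)
  show ?thesis unfolding tour_edges_def l c p by auto
qed

lemma Z_edges: assumes n: "n \<ge> 6"
  shows "tour_edges n (2 # [4..<n]) [3] = {{1,2},{2,4},{n,3},{3,1},{4,5}} \<union> Q n"
proof -
  have l: "1 # (2 # [4..<n]) @ n # [3] = [1,2] @ [4..<Suc n] @ [3]" using n by simp
  have h: "hd [4..<Suc n] = 4" "last [4..<Suc n] = n" "[4..<Suc n] \<noteq> []"
    using n by (simp_all del: upt_Suc)
  have ne: "[1,2] @ [4..<Suc n] @ [3] \<noteq> []" by simp
  have c: "cycle_edges ([1,2] @ [4..<Suc n] @ [3]) = insert {3,1} (pe ([1,2] @ [4..<Suc n] @ [3]))"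
    using cycle_edges_pe[OF ne] h by (simp del: upt_Suc)
  have p: "pe ([1,2] @ [4..<Suc n] @ [3]) = {{1,2},{2,4},{n,3},{4,5}} \<union> Q n"
    using n h by (simp add: pe_Cons pe_append pe_up4 insert_commute del: upt_Suc)
  show ?thesis unfolding tour_edges_def l c p by auto
qed

lemma W_edges: assumes n: "n \<ge> 6"
  shows "tour_edges n (2 # 3 # [5..<n]) [4] = {{1,2},{2,3},{3,5},{n,4},{4,1}} \<union> Q n"
proof -
  have l: "1 # (2 # 3 # [5..<n]) @ n # [4] = [1,2,3] @ [5..<Suc n] @ [4]" using n by simp
  have h: "hd [5..<Suc n] = 5" "last [5..<Suc n] = n" "[5..<Suc n] \<noteq> []"
    using n by (simp_all del: upt_Suc)
  have ne: "[1,2,3] @ [5..<Suc n] @ [4] \<noteq> []" by simp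
  have c: "cycle_edges ([1,2,3] @ [5..<Suc n] @ [4]) = insert {4,1} (pe ([1,2,3] @ [5..<Suc n] @ [4]))"
    using cycle_edges_pe[OF ne] h by (simp del: upt_Suc)
  have p: "pe ([1,2,3] @ [5..<Suc n] @ [4]) = {{1,2},{2,3},{3,5},{n,4}} \<union> Q n"
    using n h by (simp add: pe_Cons pe_append pe_up5 insert_commute del: upt_Suc)
  show ?thesis unfolding tour_edges_def l c p by auto
qed

lemma Q_mem: "e \<in> Q n \<Longrightarrow> \<exists>i. 5 \<le> i \<and> i < n \<and> e = {i, Suc i}" by (auto simp: Q_def)

lemma char_rel:
  assumes n: "n \<ge> 6"
  shows "char_vec ({{1,2},{2,3},{3,n},{4,1},{4,5}} \<union> Q n) e + char_vec ({{1,2},{2,4},{4,n},{5,3},{3,1}} \<union> Q n) e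
       = char_vec ({{1,2},{2,4},{n,3},{3,1},{4,5}} \<union> Q n) e + char_vec ({{1,2},{2,3},{3,5},{n,4},{4,1}} \<union> Q n) e"
proof (cases "e \<in> Q n")
  case True
  then show ?thesis by (simp add: char_vec_def)
next
  case False
  then show ?thesis using n by (auto simp: char_vec_def doubleton_eq_iff)
qed

lemma pyrX: "n \<ge> 6 \<Longrightarrow> pyr_seq n [2,3] (rev [4..<n])"
  unfolding pyr_seq_def by (auto simp: sorted_wrt_rev)
lemma pyrY: "n \<ge> 6 \<Longrightarrow> pyr_seq n [2,4] (rev [5..<n] @ [3])"
  unfolding pyr_seq_def by (auto simp: sorted_wrt_rev sorted_wrt_append)
lemma pyrZ: "n \<ge> 6 \<Longrightarrow> pyr_seq n (2 # [4..<n]) [3]"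
  unfolding pyr_seq_def by auto
lemma pyrW: "n \<ge> 6 \<Longrightarrow> pyr_seq n (2 # 3 # [5..<n]) [4]"
  unfolding pyr_seq_def by auto

lemma inPT: "pyr_seq n xs ys \<Longrightarrow> tour_edges n xs ys \<in> PT n"
  unfolding PT_def by blast

lemma finite_PT: "finite (PT n)"
proof (rule finite_subset)
  show "PT n \<subseteq> Pow (Pow {0..Suc n})"
  proof
    fix T assume "T \<in> PT n"
    then obtain xs ys where p: "pyr_seq n xs ys" and T: "T = tour_edges n xs ys" by (auto simp: PT_def)
    have s: "set (1 # xs @ n # ys) \<subseteq> {0..Suc n}" using p by (auto simp: pyr_seq_def)
    have "cycle_edges (1 # xs @ n # ys) \<subseteq> Pow (set (1 # xs @ n # ys))"
      unfolding cycle_edges_def by (auto simp del: set_simps set_append)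
    then show "T \<in> Pow (Pow {0..Suc n})" using s unfolding T tour_edges_def by blast
  qed
qed simp

lemma extreme_PT: "T \<in> PT n \<Longrightarrow> char_vec T extreme_point_of PYR n"
  unfolding PYR_def by (rule extreme_char[OF finite_PT])

lemma nonadj:
  assumes n: "n \<ge> 6"
  shows "\<not> adjacent_in (PYR n) (char_vec (tour_edges n [2,3] (rev [4..<n]))) (char_vec (tour_edges n [2,4] (rev [5..<n] @ [3])))"
proof
  define x where "x = char_vec (tour_edges n [2,3] (rev [4..<n]))"
  define y where "y = char_vec (tour_edges n [2,4] (rev [5..<n] @ [3]))"
  define z where "z = char_vec (tour_edges n (2 # [4..<n]) [3])"
  define w where "w = char_vec (tour_edges n (2 # 3 # [5..<n]) [4])"
  assume "adjacent_in (PYR n) (char_vec (tour_edges n [2,3] (rev [4..<n]))) (char_vec (tour_edges n [2,4] (rev [5..<n] @ [3])))"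
  then have F: "closed_segment x y face_of PYR n" by (simp add: adjacent_in_def x_def y_def)
  have zP: "z \<in> PYR n" unfolding z_def PYR_def
    by (rule hull_inc) (use inPT[OF pyrZ[OF n]] in blast)
  have wP: "w \<in> PYR n" unfolding w_def PYR_def
    by (rule hull_inc) (use inPT[OF pyrW[OF n]] in blast)
  have rel: "x e + y e = z e + w e" for e
    unfolding x_def y_def z_def w_def X_edges[OF n] Y_edges[OF n] Z_edges[OF n] W_edges[OF n]
    by (rule char_rel[OF n])
  have q24: "{2,4} \<notin> Q n" "{4,n} \<notin> Q n" using n by (auto simp: Q_def doubleton_eq_iff)
  have v24: "x {2,4} = 0" "y {2,4} = 1" "z {2,4} = 1" "w {2,4} = 0"
    unfolding x_def y_def z_def w_def X_edges[OF n] Y_edges[OF n] Z_edges[OF n] W_edges[OF n]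
    using n q24 by (auto simp: char_vec_def doubleton_eq_iff)
  have v4n: "x {4,n} = 0" "y {4,n} = 1" "z {4,n} = 0"
    unfolding x_def y_def z_def w_def X_edges[OF n] Y_edges[OF n] Z_edges[OF n] W_edges[OF n]
    using n q24 by (auto simp: char_vec_def doubleton_eq_iff)
  define m where "m = (1 - 1/2) *\<^sub>R x + (1/2) *\<^sub>R y"
  have mseg: "m \<in> closed_segment x y" unfolding m_def closed_segment_def by (rule CollectI, rule exI[of _ "1/2"]) simp
  have mzw: "m = (1 - 1/2) *\<^sub>R z + (1/2) *\<^sub>R w"
    unfolding m_def
  proof (rule ext)
    fix e
    have r: "x e + y e = z e + w e" by (rule rel)
    show "((1 - 1/2) *\<^sub>R x + (1/2) *\<^sub>R y) e = ((1 - 1/2) *\<^sub>R z + (1/2) *\<^sub>R w) e"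
      using r by (simp add: scaleR_fun_def plus_fun_def; linarith)
  qed
  have zw: "z \<noteq> w" using v24 by auto
  have "m \<in> open_segment z w" unfolding in_segment using zw mzw
    by (intro conjI exI[of _ "1/2"]) auto
  then have "z \<in> closed_segment x y" using face_ofD[OF F _ zP wP mseg] by blast
  then obtain t where t: "z = (1 - t) *\<^sub>R x + t *\<^sub>R y" unfolding closed_segment_def by blast
  have "z {2,4} = (1 - t) * x {2,4} + t * y {2,4}" "z {4,n} = (1 - t) * x {4,n} + t * y {4,n}"
    using t by (simp_all add: scaleR_fun_def plus_fun_def)
  then show False using v24 v4n by simp
qed

lemma det_lists:
  fixes xs ys l l' :: "nat list"
  assumes "sorted_wrt (<) xs" "sorted_wrt (>) ys" "set xs = set l" "set ys = set l'"
    "sorted_wrt (<) l" "sorted_wrt (>) l'"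
  shows "xs = l \<and> ys = l'"
proof
  show "xs = l" using strict_sorted_equal[OF assms(5) assms(1) assms(3)] .
  have "rev ys = rev l'"
    by (rule strict_sorted_equal) (use assms in \<open>auto simp: sorted_wrt_rev\<close>)
  then show "ys = l'" by simp
qed

lemma all_adj:
  assumes fin: "finite F" and priv: "\<forall>A\<in>F. \<exists>e\<in>A. \<forall>C\<in>F. C \<noteq> A \<longrightarrow> e \<notin> C"
    and x: "x extreme_point_of convex hull (char_vec ` F)"
    and y: "y extreme_point_of convex hull (char_vec ` F)" and xy: "x \<noteq> y"
  shows "adjacent_in (convex hull (char_vec ` F)) x y"
proof -
  obtain A where A: "A \<in> F" "x = char_vec A" using extreme_point_of_convex_hull[OF x] by blast
  obtain B where B: "B \<in> F" "y = char_vec B" using extreme_point_of_convex_hull[OF y] by blast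
  have AB: "A \<noteq> B" proof assume "A = B" then have "x = y" using A(2) B(2) by simp then show False using xy by contradiction qed
  obtain ea where ea: "ea \<in> A" "\<forall>C\<in>F. C \<noteq> A \<longrightarrow> ea \<notin> C" using priv A by blast
  obtain eb where eb: "eb \<in> B" "\<forall>C\<in>F. C \<noteq> B \<longrightarrow> eb \<notin> C" using priv B by blast
  have "closed_segment (char_vec A) (char_vec B) face_of convex hull (char_vec ` F)"
  proof (rule seg_face[OF fin A(1) B(1) AB])
    show "ea \<in> A" "eb \<in> B" using ea eb by auto
    show "ea \<notin> B" using ea(2) B(1) AB by blast
    show "eb \<notin> A" using eb(2) A(1) AB by blast
    show "\<forall>C\<in>F - {A, B}. ea \<notin> C \<and> eb \<notin> C" using ea(2) eb(2) by blast
  qed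
  then show ?thesis using xy A B by (simp add: adjacent_in_def)
qed

lemma priv_sub:
  assumes "F \<subseteq> S" "\<forall>A\<in>S. \<exists>e\<in>A. \<forall>C\<in>S. C \<noteq> A \<longrightarrow> e \<notin> C"
  shows "\<forall>A\<in>F. \<exists>e\<in>A. \<forall>C\<in>F. C \<noteq> A \<longrightarrow> e \<notin> C"
proof
  fix A assume "A \<in> F"
  then have "A \<in> S" using assms(1) by blast
  then obtain e where "e \<in> A" "\<forall>C\<in>S. C \<noteq> A \<longrightarrow> e \<notin> C" using assms(2) by blast
  then show "\<exists>e\<in>A. \<forall>C\<in>F. C \<noteq> A \<longrightarrow> e \<notin> C" using assms(1) by blast
qed

lemma PT4_sub: "PT 4 \<subseteq> {{{1,2},{2,3},{3,4},{4,1}}, {{1,2},{2,4},{4,3},{3,1}}}"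
proof
  fix T assume "T \<in> PT 4"
  then obtain xs ys where p: "pyr_seq 4 xs ys" and T: "T = tour_edges 4 xs ys" by (auto simp: PT_def)
  have s: "set xs \<union> set ys = {2,3}" "set xs \<inter> set ys = {}" and so: "sorted_wrt (<) xs" "sorted_wrt (>) ys"
    using p unfolding pyr_seq_def by auto
  have c: "set ys = {2,3} - set xs" using s by blast
  have "set xs \<in> Pow {2,3}" using s by auto
  then have "set xs = {} \<or> set xs = {2} \<or> set xs = {3} \<or> set xs = {2,3}" by (simp add: Pow_insert) blast
  then have "(xs = [] \<and> ys = [3,2]) \<or> (xs = [2] \<and> ys = [3]) \<or> (xs = [3] \<and> ys = [2]) \<or> (xs = [2,3] \<and> ys = [])"
  proof (elim disjE)
    assume h: "set xs = {}"
    have h2: "set ys = {3,2}" using h c by auto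
    show ?thesis using det_lists[OF so, of "[]" "[3,2]"] h h2 by simp
  next
    assume h: "set xs = {2}"
    have h2: "set ys = {3}" using h c by auto
    show ?thesis using det_lists[OF so, of "[2]" "[3]"] h h2 by simp
  next
    assume h: "set xs = {3}"
    have h2: "set ys = {2}" using h c by auto
    show ?thesis using det_lists[OF so, of "[3]" "[2]"] h h2 by simp
  next
    assume h: "set xs = {2,3}"
    have h2: "set ys = {}" using h c by auto
    show ?thesis using det_lists[OF so, of "[2,3]" "[]"] h h2 by simp
  qed
  then show "T \<in> {{{1,2},{2,3},{3,4},{4,1}}, {{1,2},{2,4},{4,3},{3,1}}}"
    unfolding T tour_edges_def by (elim disjE) (simp_all add: cycle_edges_pe insert_commute)
qed

lemma PT5_sub: "PT 5 \<subseteq> {{{1,2},{2,5},{5,4},{4,3},{3,1}}, {{1,2},{2,4},{4,5},{5,3},{3,1}}, {{1,2},{2,3},{3,5},{5,4},{4,1}}, {{1,2},{2,3},{3,4},{4,5},{5,1}}}"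
proof
  fix T assume "T \<in> PT 5"
  then obtain xs ys where p: "pyr_seq 5 xs ys" and T: "T = tour_edges 5 xs ys" by (auto simp: PT_def)
  have s: "set xs \<union> set ys = {2,3,4}" "set xs \<inter> set ys = {}" and so: "sorted_wrt (<) xs" "sorted_wrt (>) ys"
    using p unfolding pyr_seq_def by auto
  have c: "set ys = {2,3,4} - set xs" using s by blast
  have "set xs \<in> Pow {2,3,4}" using s by auto
  then have "set xs = {} \<or> set xs = {2} \<or> set xs = {3} \<or> set xs = {4} \<or> set xs = {2,3} \<or> set xs = {2,4} \<or> set xs = {3,4} \<or> set xs = {2,3,4}" by (simp add: Pow_insert) blast
  then have "(xs = [] \<and> ys = [4,3,2]) \<or> (xs = [2] \<and> ys = [4,3]) \<or> (xs = [3] \<and> ys = [4,2]) \<or> (xs = [4] \<and> ys = [3,2]) \<or> (xs = [2,3] \<and> ys = [4]) \<or> (xs = [2,4] \<and> ys = [3]) \<or> (xs = [3,4] \<and> ys = [2]) \<or> (xs = [2,3,4] \<and> ys = [])"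
  proof (elim disjE)
    assume h: "set xs = {}"
    have h2: "set ys = {4,3,2}" using h c by auto
    show ?thesis using det_lists[OF so, of "[]" "[4,3,2]"] h h2 by simp
  next
    assume h: "set xs = {2}"
    have h2: "set ys = {4,3}" using h c by auto
    show ?thesis using det_lists[OF so, of "[2]" "[4,3]"] h h2 by simp
  next
    assume h: "set xs = {3}"
    have h2: "set ys = {4,2}" using h c by auto
    show ?thesis using det_lists[OF so, of "[3]" "[4,2]"] h h2 by simp
  next
    assume h: "set xs = {4}"
    have h2: "set ys = {3,2}" using h c by auto
    show ?thesis using det_lists[OF so, of "[4]" "[3,2]"] h h2 by simp
  next
    assume h: "set xs = {2,3}"
    have h2: "set ys = {4}" using h c by auto
    show ?thesis using det_lists[OF so, of "[2,3]" "[4]"] h h2 by simp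
  next
    assume h: "set xs = {2,4}"
    have h2: "set ys = {3}" using h c by auto
    show ?thesis using det_lists[OF so, of "[2,4]" "[3]"] h h2 by simp
  next
    assume h: "set xs = {3,4}"
    have h2: "set ys = {2}" using h c by auto
    show ?thesis using det_lists[OF so, of "[3,4]" "[2]"] h h2 by simp
  next
    assume h: "set xs = {2,3,4}"
    have h2: "set ys = {}" using h c by auto
    show ?thesis using det_lists[OF so, of "[2,3,4]" "[]"] h h2 by simp
  qed
  then show "T \<in> {{{1,2},{2,5},{5,4},{4,3},{3,1}}, {{1,2},{2,4},{4,5},{5,3},{3,1}}, {{1,2},{2,3},{3,5},{5,4},{4,1}}, {{1,2},{2,3},{3,4},{4,5},{5,1}}}"
    unfolding T tour_edges_def by (elim disjE) (simp_all add: cycle_edges_pe insert_commute)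
qed

lemma XY_ne:
  assumes n: "n \<ge> 6"
  shows "char_vec (tour_edges n [2,3] (rev [4..<n])) \<noteq> char_vec (tour_edges n [2,4] (rev [5..<n] @ [3]))"
proof
  assume h: "char_vec (tour_edges n [2,3] (rev [4..<n])) = char_vec (tour_edges n [2,4] (rev [5..<n] @ [3]))"
  have q24: "{2,4} \<notin> Q n" using n by (auto simp: Q_def doubleton_eq_iff)
  have "char_vec (tour_edges n [2,3] (rev [4..<n])) {2,4} = 0"
       "char_vec (tour_edges n [2,4] (rev [5..<n] @ [3])) {2,4} = 1"
    unfolding X_edges[OF n] Y_edges[OF n] using n q24 by (auto simp: char_vec_def doubleton_eq_iff)
  then show False using h by simp
qed

lemma priv4: "\<forall>A\<in>{{{1,2},{2,3},{3,4},{4,1}}, {{1,2},{2,4},{4,3},{3,1}}}. \<exists>e\<in>A. \<forall>C\<in>{{{1,2},{2,3},{3,4},{4,1}}, {{1,2},{2,4},{4,3},{3,1}}}. C \<noteq> A \<longrightarrow> e \<notin> (C::nat set set)"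
  by (simp add: doubleton_eq_iff)

lemma priv5: "\<forall>A\<in>{{{1,2},{2,5},{5,4},{4,3},{3,1}}, {{1,2},{2,4},{4,5},{5,3},{3,1}}, {{1,2},{2,3},{3,5},{5,4},{4,1}}, {{1,2},{2,3},{3,4},{4,5},{5,1}}}. \<exists>e\<in>A. \<forall>C\<in>{{{1,2},{2,5},{5,4},{4,3},{3,1}}, {{1,2},{2,4},{4,5},{5,3},{3,1}}, {{1,2},{2,3},{3,5},{5,4},{4,1}}, {{1,2},{2,3},{3,4},{4,5},{5,1}}}. C \<noteq> A \<longrightarrow> e \<notin> (C::nat set set)"
  by (simp add: doubleton_eq_iff)

lemma conj1_n:
  assumes "n = 4 \<or> n = 5" and x: "x extreme_point_of PYR n" and y: "y extreme_point_of PYR n" and xy: "x \<noteq> y"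
  shows "adjacent_in (PYR n) x y"
proof -
  have pr: "\<forall>A\<in>PT n. \<exists>e\<in>A. \<forall>C\<in>PT n. C \<noteq> A \<longrightarrow> e \<notin> C"
    using assms(1) priv_sub[OF PT4_sub priv4] priv_sub[OF PT5_sub priv5] by blast
  show ?thesis using all_adj[OF finite_PT pr] x y xy unfolding PYR_def by blast
qed

lemma conj2: "n \<ge> 6 \<Longrightarrow> \<exists>x y. x extreme_point_of PYR n \<and> y extreme_point_of PYR n \<and> x \<noteq> y
                   \<and> \<not> adjacent_in (PYR n) x y"
proof -
  assume n: "n \<ge> 6"
  show ?thesis using extreme_PT[OF inPT[OF pyrX[OF n]]] extreme_PT[OF inPT[OF pyrY[OF n]]] XY_ne[OF n] nonadj[OF n] by blast
qed

lemma code6: "{3..(6::nat)-1} = {3,4,5}" by auto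

lemma pyr6X: "pyr_seq 6 [2,3] [5,4]" by (auto simp: pyr_seq_def)
lemma pyr6Y: "pyr_seq 6 [2,4] [5,3]" by (auto simp: pyr_seq_def)

lemma conj3: "\<exists>T1 T2. T1 \<in> PT 6 \<and> has_code 6 T1 [1, 0, 0] \<and>
                  T2 \<in> PT 6 \<and> has_code 6 T2 [0, 1, 0]"
proof (intro exI conjI)
  show "tour_edges 6 [2,3] [5,4] \<in> PT 6" by (rule inPT[OF pyr6X])
  show "tour_edges 6 [2,4] [5,3] \<in> PT 6" by (rule inPT[OF pyr6Y])
  show "has_code 6 (tour_edges 6 [2,3] [5,4]) [1, 0, 0]"
    unfolding has_code_def code6
    by (rule conjI, simp, rule exI[of _ "[2,3]"], rule exI[of _ "[5,4]"]) (use pyr6X in \<open>auto simp: code6\<close>)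
  show "has_code 6 (tour_edges 6 [2,4] [5,3]) [0, 1, 0]"
    unfolding has_code_def code6
    by (rule conjI, simp, rule exI[of _ "[2,4]"], rule exI[of _ "[5,3]"]) (use pyr6Y in \<open>auto simp: code6\<close>)
qed

lemma code_X: "has_code 6 T [1,0,0] \<Longrightarrow> T = tour_edges 6 [2,3] (rev [4..<6])"
proof -
  assume "has_code 6 T [1,0,0]"
  then obtain xs ys where p: "pyr_seq 6 xs ys" and two: "2 \<in> set xs" and T: "T = tour_edges 6 xs ys"
    and c: "\<forall>i\<in>{3..6-1}. ([1,0,0::nat] ! (i - 3) = 1 \<longleftrightarrow> i \<in> set xs) \<and> [1,0,0::nat] ! (i - 3) \<in> {0, 1}"
    unfolding has_code_def by blast
  have s: "set xs \<union> set ys = {2,3,4,5}" "set xs \<inter> set ys = {}" and so: "sorted_wrt (<) xs" "sorted_wrt (>) ys"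
    using p unfolding pyr_seq_def by auto
  have "3 \<in> set xs" using bspec[OF c, of 3] by simp
  moreover have "4 \<notin> set xs" using bspec[OF c, of 4] by simp
  moreover have "5 \<notin> set xs" using bspec[OF c, of 5] by simp
  ultimately have "3 \<in> set xs" "4 \<notin> set xs" "5 \<notin> set xs" by auto
  then have h: "set xs = {2,3}" using s two by auto
  have cy: "set ys = {2,3,4,5} - set xs" using s by blast
  have h2: "set ys = {5,4}" using cy h by auto
  have "xs = [2,3] \<and> ys = [5,4]" using det_lists[OF so, of "[2,3]" "[5,4]"] h h2 by simp
  moreover have "rev [4..<6] = [5,4::nat]" by (simp add: upt_rec)
  ultimately show ?thesis using T by simp
qed

lemma code_Y: "has_code 6 T [0,1,0] \<Longrightarrow> T = tour_edges 6 [2,4] (rev [5..<6] @ [3])"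
proof -
  assume "has_code 6 T [0,1,0]"
  then obtain xs ys where p: "pyr_seq 6 xs ys" and two: "2 \<in> set xs" and T: "T = tour_edges 6 xs ys"
    and c: "\<forall>i\<in>{3..6-1}. ([0,1,0::nat] ! (i - 3) = 1 \<longleftrightarrow> i \<in> set xs) \<and> [0,1,0::nat] ! (i - 3) \<in> {0, 1}"
    unfolding has_code_def by blast
  have s: "set xs \<union> set ys = {2,3,4,5}" "set xs \<inter> set ys = {}" and so: "sorted_wrt (<) xs" "sorted_wrt (>) ys"
    using p unfolding pyr_seq_def by auto
  have "3 \<notin> set xs" using bspec[OF c, of 3] by simp
  moreover have "4 \<in> set xs" using bspec[OF c, of 4] by simp
  moreover have "5 \<notin> set xs" using bspec[OF c, of 5] by simp
  ultimately have "3 \<notin> set xs" "4 \<in> set xs" "5 \<notin> set xs" by auto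
  then have h: "set xs = {2,4}" using s two by auto
  have cy: "set ys = {2,3,4,5} - set xs" using s by blast
  have h2: "set ys = {5,3}" using cy h by auto
  have "xs = [2,4] \<and> ys = [5,3]" using det_lists[OF so, of "[2,4]" "[5,3]"] h h2 by simp
  moreover have "rev [5..<6] @ [3] = [5,3::nat]" by (simp add: upt_rec)
  ultimately show ?thesis using T by simp
qed

theorem mainTheorem5:
  shows "(\<forall>n. 4 \<le> n \<and> n \<le> 5 \<longrightarrow>
            (\<forall>x y. x extreme_point_of PYR n \<and> y extreme_point_of PYR n \<and> x \<noteq> y
                   \<longrightarrow> adjacent_in (PYR n) x y))
       \<and> (\<forall>n\<ge>6. \<exists>x y. x extreme_point_of PYR n \<and> y extreme_point_of PYR n \<and> x \<noteq> y
                   \<and> \<not> adjacent_in (PYR n) x y)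
       \<and> (\<exists>T1 T2. T1 \<in> PT 6 \<and> has_code 6 T1 [1, 0, 0] \<and>
                  T2 \<in> PT 6 \<and> has_code 6 T2 [0, 1, 0])
       \<and> (\<forall>T1 T2. T1 \<in> PT 6 \<and> has_code 6 T1 [1, 0, 0] \<and>
                  T2 \<in> PT 6 \<and> has_code 6 T2 [0, 1, 0]
                  \<longrightarrow> \<not> adjacent_in (PYR 6) (char_vec T1) (char_vec T2))"
proof (intro conjI allI impI)
  fix n x y assume n: "4 \<le> n \<and> n \<le> 5"
    and h: "x extreme_point_of PYR n \<and> y extreme_point_of PYR n \<and> x \<noteq> y"
  have "n = 4 \<or> n = 5" using n by auto
  then show "adjacent_in (PYR n) x y" using conj1_n h by blast
next
  fix n :: nat assume "6 \<le> n"
  then show "\<exists>x y. x extreme_point_of PYR n \<and> y extreme_point_of PYR n \<and> x \<noteq> y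
                   \<and> \<not> adjacent_in (PYR n) x y" by (rule conj2)
next
  show "\<exists>T1 T2. T1 \<in> PT 6 \<and> has_code 6 T1 [1, 0, 0] \<and>
                  T2 \<in> PT 6 \<and> has_code 6 T2 [0, 1, 0]" by (rule conj3)
next
  fix T1 T2 assume h: "T1 \<in> PT 6 \<and> has_code 6 T1 [1, 0, 0] \<and> T2 \<in> PT 6 \<and> has_code 6 T2 [0, 1, 0]"
  then have "T1 = tour_edges 6 [2,3] (rev [4..<6])" "T2 = tour_edges 6 [2,4] (rev [5..<6] @ [3])"
    using code_X code_Y by blast+
  then show "\<not> adjacent_in (PYR 6) (char_vec T1) (char_vec T2)" using nonadj[of 6] by simp
qed

end
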